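(* Let $v \in \mathbb{R}^n$ and let $G=(V,E)$ be a $p$-regular multigraph with $|V|=a$ and $|E|=b$. Then \[ \kappa_G(v^{\otimes p}) = \frac{n^{\underline{b}}}{(n+2b-2)(n+2b-4)\cdots(n+2)\,n}\,\|v\|^{2b}, \] where $n^{\underline{b}} = n!/(n-b)! = n(n-1)\cdots(n-b+1)$ is the falling factorial and the denominator is the falling double factorial $(n+2b-2)!!/(n-2)!! = \prod_{j=0}^{b-1}(n+2j)$.
   Context: For a symmetric $p$-ary tensor $T$ and an orthogonal (or general) matrix $Q$, $Q\cdot T$ denotes the change of basis $(Q\cdot T)_{j_1,\ldots,j_p}=\sum_{i_1,\ldots,i_p} T_{i_1,\ldots,i_p}\prod_{t=1}^p Q_{i_t,j_t}$. For a $p$-regular multigraph $G=(V,E)$ with $b$ edges, the distinct-index graph moment is $m^!_G(T)=\sum_{i\in[n]^E,\ i_1,\ldots,i_b \text{ distinct}} \prod_{v\in V} T_{i(\partial v)}$, where $i(\partial v)$ is the multiset of indices on the edges incident to $v$. The (finite) free cumulant of $T$ is $\kappa_G(T)=\mathbb{E}_Q[m^!_G(Q\cdot T)]$ with $Q$ Haar-random in $\mathcal{O}(n)$ ($\kappa_\emptyset=1$). $v^{\otimes p}$ is the rank-one tensor with entries $v_{i_1}\cdots v_{i_p}$. *)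

theory Defs
  imports "HOL-Analysis.Analysis" "HOL-Probability.Probability"
begin

text \<open>Tensors of order p over R^n (index type 'n, n = CARD('n)) are functions from
 index lists (of length p) to reals.\<close>
type_synonym 'n tensor = "'n list \<Rightarrow> real"

definition change_basis :: "nat \<Rightarrow> real^'n^'n \<Rightarrow> ('n::finite) tensor \<Rightarrow> 'n tensor" where
  "change_basis p Q T = (\<lambda>js. \<Sum>is\<in>{is::'n list. length is = p}.
      T is * (\<Prod>t<p. Q $ (is ! t) $ (js ! t)))"

definition rank_one :: "real^'n \<Rightarrow> 'n tensor" where
  "rank_one v = (\<lambda>is. prod_list (map (\<lambda>i. v $ i) is))"

text \<open>Evaluating a symmetric tensor at a multiset of indices.\<close>
definition tensor_at :: "'n tensor \<Rightarrow> 'n multiset \<Rightarrow> real" where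
  "tensor_at T M = T (SOME xs. mset xs = M)"

text \<open>A multigraph on vertices {0..<a} is a list E of edges (pairs of endpoints);
 edge e (e < length E) joins fst (E!e) and snd (E!e); loops allowed.\<close>
definition incid :: "(nat \<times> nat) list \<Rightarrow> nat \<Rightarrow> nat multiset" where
  "incid E v = (\<Sum>e<length E. (if fst (E!e) = v then {#e#} else {#}) +
                              (if snd (E!e) = v then {#e#} else {#}))"

definition p_regular_multigraph :: "nat \<Rightarrow> nat \<Rightarrow> (nat \<times> nat) list \<Rightarrow> bool" where
  "p_regular_multigraph p a E \<longleftrightarrow>
     (\<forall>e\<in>set E. fst e < a \<and> snd e < a) \<and> (\<forall>v<a. size (incid E v) = p)"

definition graph_moment_distinct :: "nat \<Rightarrow> (nat \<times> nat) list \<Rightarrow> ('n::finite) tensor \<Rightarrow> real" where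
  "graph_moment_distinct a E T =
     (\<Sum>i\<in>{i \<in> {0..<length E} \<rightarrow>\<^sub>E (UNIV::'n set). inj_on i {0..<length E}}.
        \<Prod>v<a. tensor_at T (image_mset i (incid E v)))"

text \<open>Haar probability measure on O(n): a probability measure on n x n real matrices,
 concentrated on the orthogonal matrices and invariant under left multiplication by
 orthogonal matrices (unique by uniqueness of Haar measure on the compact group O(n)).\<close>
definition haar_orthogonal :: "(real^'n^'n) measure \<Rightarrow> bool" where
  "haar_orthogonal \<mu> \<longleftrightarrow> prob_space \<mu> \<and> sets \<mu> = sets borel \<and>
     (AE Q in \<mu>. orthogonal_matrix Q) \<and>
     (\<forall>U. orthogonal_matrix U \<longrightarrow> distr \<mu> borel (\<lambda>Q. U ** Q) = \<mu>)"

definition free_cumulant :: "(real^'n^'n) measure \<Rightarrow> nat \<Rightarrow> nat \<Rightarrow> (nat \<times> nat) list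
     \<Rightarrow> ('n::finite) tensor \<Rightarrow> real" where
  "free_cumulant \<mu> p a E T = (\<integral>Q. graph_moment_distinct a E (change_basis p Q T) \<partial>\<mu>)"

end

theory Submission
  imports Defs "HOL-Computational_Algebra.Polynomial"
begin


definition wv :: "real^'n^'n \<Rightarrow> real^'n \<Rightarrow> real^'n" where
  "wv Q x = (\<chi> i. \<Sum>k\<in>UNIV. Q$k$i * x$k)"

definition esq :: "nat \<Rightarrow> real^('n::finite) \<Rightarrow> real" where
  "esq b w = (\<Sum>A\<in>{A::'n set. card A = b}. \<Prod>i\<in>A. (w$i)^2)"

definition injs :: "nat \<Rightarrow> (nat \<Rightarrow> 'n) set" where
  "injs b = {i \<in> {0..<b} \<rightarrow>\<^sub>E (UNIV::'n set). inj_on i {0..<b}}"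

lemma sum_lists_prod:
  fixes f :: "nat \<Rightarrow> 'a::finite \<Rightarrow> real"
  shows "(\<Sum>is\<in>{is::'a::finite list. length is = p}. \<Prod>t<p. f t (is!t)) = (\<Prod>t<p. \<Sum>i\<in>UNIV. f t i)"
proof (induction p arbitrary: f)
  case 0
  then show ?case by simp
next
  case (Suc p)
  have eq: "{is::'a list. length is = Suc p} = (\<lambda>(x,xs). x#xs) ` (UNIV \<times> {is. length is = p})"
    by (auto simp: length_Suc_conv image_def)
  have inj: "inj_on (\<lambda>(x,xs). x#xs) (UNIV \<times> {is::'a list. length is = p})"
    by (auto simp: inj_on_def)
  have "(\<Sum>is\<in>{is::'a list. length is = Suc p}. \<Prod>t<Suc p. f t (is!t))
      = (\<Sum>(x,xs)\<in>UNIV \<times> {is::'a list. length is = p}. f 0 x * (\<Prod>t<p. f (Suc t) (xs!t)))"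
    unfolding eq by (subst sum.reindex[OF inj]) (simp add: case_prod_beta prod.lessThan_Suc_shift del: prod.lessThan_Suc)
  also have "\<dots> = (\<Sum>x\<in>UNIV. f 0 x * (\<Sum>xs\<in>{is::'a list. length is = p}. \<Prod>t<p. f (Suc t) (xs!t)))"
    by (simp add: sum.cartesian_product[symmetric]) (simp add: sum_distrib_left)
  also have "\<dots> = (\<Sum>x\<in>UNIV. f 0 x) * (\<Prod>t<p. \<Sum>i\<in>UNIV. f (Suc t) i)"
    by (simp add: Suc.IH[of "\<lambda>t. f (Suc t)"] sum_distrib_right)
  also have "\<dots> = (\<Prod>t<Suc p. \<Sum>i\<in>UNIV. f t i)"
    by (simp add: prod.lessThan_Suc_shift del: prod.lessThan_Suc)
  finally show ?case .
qed

lemma change_basis_rank_one: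
  fixes Q :: "real^'n^'n"
  assumes "length js = p"
  shows "change_basis p Q (rank_one v) js = (\<Prod>t<p. wv Q v $ (js!t))"
proof -
  have "change_basis p Q (rank_one v) js =
     (\<Sum>is\<in>{is::'n list. length is = p}. \<Prod>t<p. v $ (is!t) * Q $ (is!t) $ (js!t))"
    unfolding change_basis_def rank_one_def
    by (intro sum.cong refl) (simp add: prod.list_conv_set_nth prod.distrib atLeast0LessThan)
  also have "\<dots> = (\<Prod>t<p. \<Sum>i\<in>UNIV. v $ i * Q $ i $ (js!t))"
    by (rule sum_lists_prod)
  also have "\<dots> = (\<Prod>t<p. wv Q v $ (js!t))"
    by (simp add: wv_def mult.commute)
  finally show ?thesis .
qed

lemma tensor_at_rank_one:
  assumes "size M = p"
  shows "tensor_at (change_basis p Q (rank_one v)) M = prod_mset (image_mset (\<lambda>i. wv Q v $ i) M)"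
proof -
  define xs where "xs = (SOME xs. mset xs = M)"
  have xs: "mset xs = M" unfolding xs_def by (rule someI_ex) (rule ex_mset)
  then have len: "length xs = p" using assms by (metis size_mset)
  have "tensor_at (change_basis p Q (rank_one v)) M = (\<Prod>t<p. wv Q v $ (xs!t))"
    unfolding tensor_at_def xs_def[symmetric] by (rule change_basis_rank_one[OF len])
  also have "\<dots> = prod_list (map (\<lambda>i. wv Q v $ i) xs)"
    by (simp add: prod.list_conv_set_nth len atLeast0LessThan)
  also have "\<dots> = prod_mset (image_mset (\<lambda>i. wv Q v $ i) M)"
    by (simp flip: xs prod_mset_prod_list)
  finally show ?thesis .
qed

lemma prod_mset_image_sum:
  "finite S \<Longrightarrow> prod_mset (image_mset f (\<Sum>e\<in>S. M e)) = (\<Prod>e\<in>S. prod_mset (image_mset f (M e)))"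
  by (induction S rule: finite_induct) auto

lemma prod_mset_if_single[simp]:
  "prod_mset (image_mset g (if c then {#e#} else {#})) = (if c then g e else 1)"
  by simp

lemma incid_prod:
  assumes "\<forall>e\<in>set E. fst e < a \<and> snd e < a"
  shows "(\<Prod>vt<a. prod_mset (image_mset g (incid E vt))) = (\<Prod>e<length E. (g e)^2)"
proof -
  have "(\<Prod>vt<a. prod_mset (image_mset g (incid E vt))) =
     (\<Prod>vt<a. \<Prod>e<length E. (if fst (E!e) = vt then g e else 1) * (if snd (E!e) = vt then g e else 1))"
    unfolding incid_def by (intro prod.cong refl) (simp add: prod_mset_image_sum)
  also have "\<dots> = (\<Prod>e<length E. \<Prod>vt<a. (if fst (E!e) = vt then g e else 1) * (if snd (E!e) = vt then g e else 1))"
    by (rule prod.swap)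
  also have "\<dots> = (\<Prod>e<length E. (g e)^2)"
  proof (intro prod.cong refl)
    fix e assume "e \<in> {..<length E}"
    then have "fst (E!e) < a" "snd (E!e) < a" using assms nth_mem by auto
    then show "(\<Prod>vt<a. (if fst (E!e) = vt then g e else 1) * (if snd (E!e) = vt then g e else 1)) = (g e)^2"
      by (simp add: prod.distrib power2_eq_square)
  qed
  finally show ?thesis .
qed

lemma graph_moment_rank_one:
  fixes Q :: "real^'n^'n"
  assumes "p_regular_multigraph p a E"
  shows "graph_moment_distinct a E (change_basis p Q (rank_one v)) =
     (\<Sum>i\<in>injs (length E). \<Prod>e<length E. (wv Q v $ i e)^2)"
proof -
  have ends: "\<forall>e\<in>set E. fst e < a \<and> snd e < a" and sz: "\<And>vt. vt < a \<Longrightarrow> size (incid E vt) = p"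
    using assms unfolding p_regular_multigraph_def by auto
  show ?thesis
    unfolding graph_moment_distinct_def injs_def
  proof (intro sum.cong refl)
    fix i assume "i \<in> {i \<in> {0..<length E} \<rightarrow>\<^sub>E (UNIV::'n set). inj_on i {0..<length E}}"
    have "(\<Prod>vt<a. tensor_at (change_basis p Q (rank_one v)) (image_mset i (incid E vt)))
        = (\<Prod>vt<a. prod_mset (image_mset (\<lambda>e. wv Q v $ i e) (incid E vt)))"
      by (intro prod.cong refl) (simp add: tensor_at_rank_one sz multiset.map_comp o_def)
    also have "\<dots> = (\<Prod>e<length E. (wv Q v $ i e)^2)"
      by (rule incid_prod[OF ends])
    finally show "(\<Prod>vt<a. tensor_at (change_basis p Q (rank_one v)) (image_mset i (incid E vt)))
        = (\<Prod>e<length E. (wv Q v $ i e)^2)" .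
  qed
qed

lemma double_count:
  fixes F :: "'n::finite set \<Rightarrow> 'n \<Rightarrow> real"
  shows "(\<Sum>B\<in>{B::'n set. card B = b}. \<Sum>x\<in>-B. F B x) =
         (\<Sum>A\<in>{A::'n set. card A = Suc b}. \<Sum>x\<in>A. F (A - {x}) x)"
proof -
  have "(\<Sum>B\<in>{B::'n set. card B = b}. \<Sum>x\<in>-B. F B x) =
        (\<Sum>(B,x)\<in>Sigma {B::'n set. card B = b} (\<lambda>B. -B). F B x)"
    by (rule sum.Sigma) auto
  also have "\<dots> = (\<Sum>(A,x)\<in>Sigma {A::'n set. card A = Suc b} (\<lambda>A. A). F (A - {x}) x)"
  proof (rule sum.reindex_bij_witness[where i = "\<lambda>(A,x). (A - {x}, x)" and j = "\<lambda>(B,x). (insert x B, x)"])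
    fix a assume "a \<in> Sigma {B::'n set. card B = b} (\<lambda>B. -B)"
    then show "(case case a of (B, x) \<Rightarrow> (insert x B, x) of (A, x) \<Rightarrow> (A - {x}, x)) = a"
      by auto
    from \<open>a \<in> _\<close> show "(case a of (B, x) \<Rightarrow> (insert x B, x)) \<in> Sigma {A. card A = Suc b} (\<lambda>A. A)"
      by (auto simp: card_insert_if)
    from \<open>a \<in> _\<close> show "(case case a of (B, x) \<Rightarrow> (insert x B, x) of (A, x) \<Rightarrow> F (A - {x}) x) = (case a of (B, x) \<Rightarrow> F B x)"
      by auto
  next
    fix a assume "a \<in> Sigma {A::'n set. card A = Suc b} (\<lambda>A. A)"
    then show "(case case a of (A, x) \<Rightarrow> (A - {x}, x) of (B, x) \<Rightarrow> (insert x B, x)) = a"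
      by auto
    from \<open>a \<in> _\<close> show "(case a of (A, x) \<Rightarrow> (A - {x}, x)) \<in> Sigma {B. card B = b} uminus"
      by auto
  qed
  also have "\<dots> = (\<Sum>A\<in>{A::'n set. card A = Suc b}. \<Sum>x\<in>A. F (A - {x}) x)"
    by (rule sum.Sigma[symmetric]) auto
  finally show ?thesis .
qed

lemma injs_sum:
  fixes H :: "'n::finite set \<Rightarrow> real"
  shows "(\<Sum>i\<in>(injs b :: (nat \<Rightarrow> 'n) set). H (i ` {0..<b})) = fact b * (\<Sum>A\<in>{A::'n set. card A = b}. H A)"
proof (induction b arbitrary: H)
  case 0
  have "{A::'n set. card A = 0} = {{}}" by auto
  then show ?case by (simp add: injs_def)
next
  case (Suc b)
  let ?S = "Sigma (injs b :: (nat \<Rightarrow> 'n) set) (\<lambda>i. - (i ` {0..<b}))"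
  have fin: "finite (injs b :: (nat \<Rightarrow> 'n) set)"
    unfolding injs_def by (rule finite_subset[of _ "{0..<b} \<rightarrow>\<^sub>E (UNIV::'n set)"]) (auto intro: finite_PiE)
  have step0: "(\<Sum>(i,x)\<in>?S. H (insert x (i ` {0..<b}))) =
     (\<Sum>i\<in>(injs (Suc b) :: (nat \<Rightarrow> 'n) set). H (i ` {0..<Suc b}))"
  proof (rule sum.reindex_bij_witness[where i = "\<lambda>f. (f(b := undefined), f b)" and j = "\<lambda>(i,x). i(b := x)"])
    fix a assume a: "a \<in> ?S"
    obtain i x where ax: "a = (i,x)" by (cases a)
    with a have i: "i \<in> {0..<b} \<rightarrow>\<^sub>E UNIV" "inj_on i {0..<b}" "x \<notin> i ` {0..<b}"
      by (auto simp: injs_def)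
    then have ib: "i b = undefined" by (auto simp: PiE_def extensional_def)
    show "(\<lambda>f. (f(b := undefined), f b)) (case a of (i, x) \<Rightarrow> i(b := x)) = a"
      using ib ax by auto
    have im: "(i(b := x)) ` {0..<b} = i ` {0..<b}" by auto
    show "(case a of (i, x) \<Rightarrow> i(b := x)) \<in> injs (Suc b)"
      using i ax unfolding injs_def
      by (auto simp: PiE_def extensional_def atLeast0_lessThan_Suc inj_on_def)
    show "H ((case a of (i, x) \<Rightarrow> i(b := x)) ` {0..<Suc b}) = (case a of (i, x) \<Rightarrow> H (insert x (i ` {0..<b})))"
      using ax im by (simp add: atLeast0_lessThan_Suc del: fun_upd_apply) simp
  next
    fix f assume f: "f \<in> (injs (Suc b) :: (nat \<Rightarrow> 'n) set)"
    show "(case (f(b := undefined), f b) of (i, x) \<Rightarrow> i(b := x)) = f" by auto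
    from f have f1: "f \<in> {0..<Suc b} \<rightarrow>\<^sub>E UNIV" "inj_on f {0..<Suc b}" by (auto simp: injs_def)
    have im: "(f(b := undefined)) ` {0..<b} = f ` {0..<b}" by auto
    have "f b \<notin> f ` {0..<b}" using f1(2) by (auto simp: inj_on_def) (metis atLeastLessThan_iff less_Suc_eq less_irrefl zero_le)
    moreover have "f(b := undefined) \<in> {0..<b} \<rightarrow>\<^sub>E UNIV" using f1(1) by (auto simp: PiE_def extensional_def)
    moreover have "inj_on (f(b := undefined)) {0..<b}" using f1(2) by (auto simp: inj_on_def)
    ultimately show "(f(b := undefined), f b) \<in> ?S" using im by (auto simp: injs_def)
  qed
  have "(\<Sum>i\<in>(injs (Suc b) :: (nat \<Rightarrow> 'n) set). H (i ` {0..<Suc b})) =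
        (\<Sum>(i,x)\<in>?S. H (insert x (i ` {0..<b})))" by (rule step0[symmetric])
  also have "\<dots> = (\<Sum>i\<in>(injs b :: (nat \<Rightarrow> 'n) set). \<Sum>x\<in>- (i ` {0..<b}). H (insert x (i ` {0..<b})))"
    by (rule sum.Sigma[symmetric]) (auto simp: fin)
  also have "\<dots> = fact b * (\<Sum>B\<in>{B::'n set. card B = b}. \<Sum>x\<in>-B. H (insert x B))"
    by (rule Suc.IH)
  also have "\<dots> = fact b * (\<Sum>A\<in>{A::'n set. card A = Suc b}. \<Sum>x\<in>A. H (insert x (A - {x})))"
    by (simp add: double_count)
  also have "\<dots> = fact b * (\<Sum>A\<in>{A::'n set. card A = Suc b}. real (Suc b) * H A)"
    by (intro arg_cong[where f = "\<lambda>y. fact b * y"] sum.cong refl) (simp add: insert_absorb)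
  also have "\<dots> = fact (Suc b) * (\<Sum>A\<in>{A::'n set. card A = Suc b}. H A)"
    by (simp add: sum_distrib_left mult_ac)
  finally show ?case .
qed

lemma injs_prod_esq:
  "(\<Sum>i\<in>(injs b :: (nat \<Rightarrow> 'n::finite) set). \<Prod>e<b. (w $ i e)^2) = fact b * esq b w"
proof -
  have "(\<Sum>i\<in>(injs b :: (nat \<Rightarrow> 'n) set). \<Prod>e<b. (w $ i e)^2) =
        (\<Sum>i\<in>(injs b :: (nat \<Rightarrow> 'n) set). (\<lambda>A. \<Prod>x\<in>A. (w $ x)^2) (i ` {0..<b}))"
  proof (intro sum.cong refl)
    fix i assume "i \<in> (injs b :: (nat \<Rightarrow> 'n) set)"
    then have "inj_on i {0..<b}" by (simp add: injs_def)
    then show "(\<Prod>e<b. (w $ i e)^2) = (\<lambda>A. \<Prod>x\<in>A. (w $ x)^2) (i ` {0..<b})"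
      by (simp add: prod.reindex lessThan_atLeast0)
  qed
  also have "\<dots> = fact b * esq b w"
    unfolding esq_def by (rule injs_sum)
  finally show ?thesis .
qed



lemma coeff_functional:
  "\<exists>lam::nat\<Rightarrow>real. \<forall>p::real poly. degree p \<le> N \<longrightarrow> coeff p m = (\<Sum>k\<le>N. lam k * poly p (real k))"
proof -
  define c where "c k = (\<Prod>l\<in>{..N}-{k}. real k - real l)" for k
  define L where "L k = smult (1 / c k) (\<Prod>l\<in>{..N}-{k}. [:- real l, 1:])" for k
  have c0: "c k \<noteq> 0" for k unfolding c_def by (auto simp: prod_zero_iff)
  have Lval: "poly (L k) (real i) = (if i = k then 1 else 0)" if "i \<le> N" for i k
  proof (cases "i = k")
    case True
    then show ?thesis using c0[of k] by (simp add: L_def poly_prod c_def)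
  next
    case False
    then have "i \<in> {..N}-{k}" using that by auto
    then have "(\<Prod>l\<in>{..N}-{k}. poly [:- real l, 1:] (real i)) = 0"
      by (intro prod_zero) auto
    then show ?thesis using False by (simp add: L_def poly_prod)
  qed
  have Ldeg: "degree (L k) \<le> N" if "k \<le> N" for k
  proof -
    have "degree (\<Prod>l\<in>{..N}-{k}. [:- real l, 1:]) \<le> (\<Sum>l\<in>{..N}-{k}. 1)"
      by (rule order.trans[OF degree_prod_sum_le]) auto
    also have "\<dots> \<le> N" using that by (auto simp: card_Diff_singleton)
    finally show ?thesis unfolding L_def by (rule order.trans[OF degree_smult_le])
  qed
  show ?thesis
  proof (intro exI allI impI)
    fix p :: "real poly" assume dp: "degree p \<le> N"
    define q where "q = (\<Sum>k\<le>N. smult (poly p (real k)) (L k))"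
    have dq: "degree q \<le> N" unfolding q_def
      by (intro degree_sum_le) (auto intro!: order.trans[OF degree_smult_le] Ldeg)
    have qv: "poly q (real i) = poly p (real i)" if "i \<le> N" for i
    proof -
      have "poly q (real i) = (\<Sum>k\<le>N. poly p (real k) * (if i = k then 1 else 0))"
        unfolding q_def poly_sum by (simp add: Lval[OF that])
      also have "\<dots> = poly p (real i)" using that by (simp add: if_distrib cong: if_cong)
      finally show ?thesis .
    qed
    have "p - q = 0"
    proof (rule ccontr)
      assume nz: "p - q \<noteq> 0"
      have "real ` {..N} \<subseteq> {x. poly (p - q) x = 0}" using qv by auto
      then have "card (real ` {..N}) \<le> card {x. poly (p - q) x = 0}"
        by (intro card_mono poly_roots_finite nz)
      moreover have "card (real ` {..N}) = Suc N" by (simp add: card_image)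
      moreover have "card {x. poly (p - q) x = 0} \<le> degree (p - q)" by (rule card_poly_roots_bound[OF nz])
      moreover have "degree (p - q) \<le> N" using dp dq by (meson degree_diff_le)
      ultimately show False by linarith
    qed
    then have "p = q" by simp
    then have "coeff p m = coeff q m" by (rule arg_cong)
    then show "coeff p m = (\<Sum>k\<le>N. coeff (L k) m * poly p (real k))"
      unfolding q_def coeff_sum coeff_smult by (simp add: mult.commute)
  qed
qed

definition Pq :: "('n \<Rightarrow> real) \<Rightarrow> ('n \<Rightarrow> real) \<Rightarrow> 'n set \<Rightarrow> real poly" where
  "Pq al be A = (\<Prod>i\<in>A. [:al i, be i:]^2)"

lemma sq_pCons: "[:a, b:]^2 = [:a^2, 2*a*b, (b::real)^2:]"
  by (simp add: power2_eq_square algebra_simps)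

lemma coeff_mult_012:
  fixes p q :: "real poly"
  shows "coeff (p*q) 0 = coeff p 0 * coeff q 0"
    "coeff (p*q) 1 = coeff p 0 * coeff q 1 + coeff p 1 * coeff q 0"
    "coeff (p*q) 2 = coeff p 0 * coeff q 2 + coeff p 1 * coeff q 1 + coeff p 2 * coeff q 0"
  by (simp_all add: coeff_mult numeral_2_eq_2)

lemma Pq_coeff0: "finite A \<Longrightarrow> coeff (Pq al be A) 0 = (\<Prod>i\<in>A. (al i)^2)"
  by (induction A rule: finite_induct) (auto simp: Pq_def coeff_mult_012 sq_pCons)

lemma Pq_coeff1: "finite A \<Longrightarrow> coeff (Pq al be A) 1 =
   (\<Sum>i\<in>A. 2 * al i * be i * (\<Prod>l\<in>A-{i}. (al l)^2))"
proof (induction A rule: finite_induct)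
  case empty
  then show ?case by (simp add: Pq_def)
next
  case (insert m A)
  have "coeff (Pq al be (insert m A)) 1 =
     (al m)^2 * coeff (Pq al be A) 1 + 2 * al m * be m * coeff (Pq al be A) 0"
    using insert by (simp add: Pq_def coeff_mult_012 sq_pCons)
  also have "\<dots> = (\<Sum>i\<in>A. 2 * al i * be i * ((al m)^2 * (\<Prod>l\<in>A-{i}. (al l)^2)))
       + 2 * al m * be m * (\<Prod>i\<in>A. (al i)^2)"
    using insert by (simp add: Pq_coeff0 sum_distrib_left mult_ac)
  also have "\<dots> = (\<Sum>i\<in>insert m A. 2 * al i * be i * (\<Prod>l\<in>insert m A-{i}. (al l)^2))"
  proof -
    have "(\<Sum>i\<in>A. 2 * al i * be i * ((al m)^2 * (\<Prod>l\<in>A-{i}. (al l)^2))) =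
          (\<Sum>i\<in>A. 2 * al i * be i * (\<Prod>l\<in>insert m A-{i}. (al l)^2))"
    proof (intro sum.cong refl)
      fix i assume "i \<in> A"
      then have "insert m A - {i} = insert m (A - {i})" "m \<notin> A - {i}" using insert by auto
      then show "2 * al i * be i * ((al m)^2 * (\<Prod>l\<in>A-{i}. (al l)^2)) =
          2 * al i * be i * (\<Prod>l\<in>insert m A-{i}. (al l)^2)" using insert by simp
    qed
    moreover have "insert m A - {m} = A" using insert by auto
    ultimately show ?thesis using insert by (simp add: add.commute)
  qed
  finally show ?case .
qed

lemma Pq_coeff2:
  fixes be :: "'j \<Rightarrow> 'n \<Rightarrow> real"
  assumes fin: "finite A" "finite J"
    and orth: "\<And>i l. (\<Sum>j\<in>J. be j i * be j l) = (if i = l then 1 else 0)"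
  shows "(\<Sum>j\<in>J. coeff (Pq al (be j) A) 2) = (\<Sum>i\<in>A. \<Prod>l\<in>A-{i}. (al l)^2)"
  using fin(1)
proof (induction A rule: finite_induct)
  case empty
  then show ?case by (simp add: Pq_def)
next
  case (insert m A)
  have PI: "Pq al (be j) (insert m A) = [:al m, be j m:]^2 * Pq al (be j) A" for j
    using insert by (simp add: Pq_def)
  have "(\<Sum>j\<in>J. coeff (Pq al (be j) (insert m A)) 2) =
     (\<Sum>j\<in>J. (al m)^2 * coeff (Pq al (be j) A) 2 + 2 * al m * be j m * coeff (Pq al (be j) A) 1
        + (be j m)^2 * coeff (Pq al (be j) A) 0)"
    unfolding PI coeff_mult_012 sq_pCons by (simp add: numeral_2_eq_2 algebra_simps)
  also have "\<dots> = (al m)^2 * (\<Sum>j\<in>J. coeff (Pq al (be j) A) 2)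
     + (\<Sum>j\<in>J. 2 * al m * be j m * coeff (Pq al (be j) A) 1)
     + (\<Sum>j\<in>J. (be j m)^2) * (\<Prod>i\<in>A. (al i)^2)"
    using insert by (simp add: sum.distrib sum_distrib_right Pq_coeff0 flip: sum_distrib_left)
  also have "(\<Sum>j\<in>J. 2 * al m * be j m * coeff (Pq al (be j) A) 1) = 0"
  proof -
    have "(\<Sum>j\<in>J. 2 * al m * be j m * coeff (Pq al (be j) A) 1) =
      (\<Sum>j\<in>J. \<Sum>i\<in>A. (2 * al m * 2 * al i * (\<Prod>l\<in>A-{i}. (al l)^2)) * (be j i * be j m))"
      using insert by (simp only: Pq_coeff1[OF insert(1)]) (simp add: sum_distrib_left mult_ac)
    also have "\<dots> = (\<Sum>i\<in>A. (2 * al m * 2 * al i * (\<Prod>l\<in>A-{i}. (al l)^2)) * (\<Sum>j\<in>J. be j i * be j m))"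
      by (subst sum.swap) (simp add: sum_distrib_left)
    also have "\<dots> = 0" using insert by (intro sum.neutral) (auto simp: orth)
    finally show ?thesis .
  qed
  also have "(\<Sum>j\<in>J. (be j m)^2) = 1" using orth[of m m] by (simp add: power2_eq_square)
  also have "(al m)^2 * (\<Sum>j\<in>J. coeff (Pq al (be j) A) 2) + 0 + 1 * (\<Prod>i\<in>A. (al i)^2)
     = (\<Sum>i\<in>insert m A. \<Prod>l\<in>insert m A-{i}. (al l)^2)"
  proof -
    have "(\<Sum>i\<in>A. \<Prod>l\<in>insert m A-{i}. (al l)^2) = (\<Sum>i\<in>A. (al m)^2 * (\<Prod>l\<in>A-{i}. (al l)^2))"
    proof (intro sum.cong refl)
      fix i assume "i \<in> A"
      then have "insert m A - {i} = insert m (A - {i})" "m \<notin> A - {i}" using insert by auto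
      then show "(\<Prod>l\<in>insert m A-{i}. (al l)^2) = (al m)^2 * (\<Prod>l\<in>A-{i}. (al l)^2)" using insert by simp
    qed
    moreover have "insert m A - {m} = A" using insert by auto
    ultimately show ?thesis using insert by (simp add: sum_distrib_left add.commute)
  qed
  finally show ?case .
qed

lemma Pq_poly: "finite A \<Longrightarrow> poly (Pq al be A) t = (\<Prod>i\<in>A. (al i + t * be i)^2)"
  by (simp add: Pq_def poly_prod mult.commute)

lemma Pq_degree: "finite A \<Longrightarrow> degree (Pq al be A) \<le> 2 * card A"
proof -
  assume "finite A"
  have "degree (Pq al be A) \<le> (\<Sum>i\<in>A. degree ([:al i, be i:]^2))"
    unfolding Pq_def by (rule order.trans[OF degree_prod_sum_le[OF \<open>finite A\<close>]]) simp
  also have "\<dots> \<le> (\<Sum>i\<in>A. 2)"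
    by (intro sum_mono order.trans[OF degree_power_le]) auto
  finally show ?thesis by simp
qed

lemma quad_pow_coeffs:
  fixes c :: real
  shows "coeff ([:1, 2*c, 1:]^b) 0 = 1 \<and> coeff ([:1, 2*c, 1:]^b) 1 = 2 * real b * c \<and>
         coeff ([:1, 2*c, 1:]^b) 2 = real b + 2 * real b * (real b - 1) * c^2"
proof (induction b)
  case 0
  then show ?case by simp
next
  case (Suc b)
  have "coeff ([:1, 2*c, 1:]^Suc b) 0 = coeff ([:1, 2*c, 1:]^b) 0"
       "coeff ([:1, 2*c, 1:]^Suc b) 1 = 2 * c * coeff ([:1, 2*c, 1:]^b) 0 + coeff ([:1, 2*c, 1:]^b) 1"
       "coeff ([:1, 2*c, 1:]^Suc b) 2 = coeff ([:1, 2*c, 1:]^b) 0 + 2 * c * coeff ([:1, 2*c, 1:]^b) 1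
          + coeff ([:1, 2*c, 1:]^b) 2"
    unfolding power_Suc coeff_mult_012 by (simp_all add: numeral_2_eq_2 algebra_simps)
  then show ?case using Suc by (simp add: power2_eq_square algebra_simps)
qed

lemma quad_pow_degree: "degree ([:1, 2*c, 1:]^b) \<le> 2 * b"
  by (rule order.trans[OF degree_power_le]) simp



lemma wv_nth[simp]: "wv Q x $ i = (\<Sum>k\<in>UNIV. Q$k$i * x$k)"
  by (simp add: wv_def)

lemma wv_transpose: "wv Q x = transpose Q *v x"
  by (simp add: vec_eq_iff matrix_vector_mult_def transpose_def mult.commute)

lemma meas_entry[measurable]: "(\<lambda>Q::real^'n^'n. Q$k$i) \<in> borel_measurable borel"
  by (intro borel_measurable_continuous_onI continuous_on_component continuous_on_id)

lemma meas_esq: "(\<lambda>Q::real^'n^'n. esq b (wv Q x)) \<in> borel_measurable borel"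
  unfolding esq_def wv_nth by measurable

lemma esq_nonneg: "0 \<le> esq b w"
  unfolding esq_def by (intro sum_nonneg prod_nonneg) auto

lemma orth_norm:
  assumes "orthogonal_matrix (Q::real^'n^'n)"
  shows "norm (wv Q x) = norm x"
proof -
  have "orthogonal_transformation (\<lambda>x. transpose Q *v x)"
    unfolding orthogonal_transformation_matrix matrix_of_matrix_vector_mul
    using assms by (simp only: orthogonal_matrix_transpose matrix_vector_mul_linear)
  then show ?thesis unfolding wv_transpose by (rule orthogonal_transformation_norm)
qed

lemma esq_bound:
  assumes "orthogonal_matrix (Q::real^'n^'n)"
  shows "esq b (wv Q x) \<le> (\<Sum>A\<in>{A::'n set. card A = b}. \<Prod>i\<in>A. (norm x)^2)"
  unfolding esq_def
proof (intro sum_mono prod_mono conjI)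
  fix A :: "'n set" and i assume "i \<in> A"
  have "\<bar>wv Q x $ i\<bar> \<le> norm x" using component_le_norm_cart[of "wv Q x" i] orth_norm[OF assms] by simp
  then show "(wv Q x $ i)^2 \<le> (norm x)^2" by (metis abs_ge_zero power2_abs power_mono)
qed auto

lemma esq_scale: "esq b (s *\<^sub>R w) = s^(2*b) * esq b w"
proof -
  have "esq b (s *\<^sub>R w) = (\<Sum>A\<in>{A::'a set. card A = b}. s^(2*b) * (\<Prod>i\<in>A. (w$i)^2))"
    unfolding esq_def
  proof (intro sum.cong refl)
    fix A :: "'a set" assume "A \<in> {A. card A = b}"
    then show "(\<Prod>i\<in>A. ((s *\<^sub>R w) $ i)^2) = s^(2*b) * (\<Prod>i\<in>A. (w$i)^2)"
      by (simp add: power_mult_distrib prod.distrib power_mult)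
  qed
  then show ?thesis by (simp add: esq_def sum_distrib_left)
qed

lemma esq_zero: "esq 0 w = 1"
proof -
  have "{A::'a set. card A = 0} = {{}}" by auto
  then show ?thesis by (simp add: esq_def)
qed

lemma wv_scale: "wv Q (s *\<^sub>R x) = s *\<^sub>R wv Q x"
  by (simp add: vec_eq_iff sum_distrib_left mult_ac)

lemma wv_mult: "wv (U ** Q) x = wv Q (transpose U *v x)"
proof -
  have "(\<Sum>k\<in>UNIV. (\<Sum>l\<in>UNIV. U$k$l * Q$l$i) * x$k) = (\<Sum>l\<in>UNIV. Q$l$i * (\<Sum>k\<in>UNIV. U$k$l * x$k))" for i
  proof -
    have "(\<Sum>k\<in>UNIV. (\<Sum>l\<in>UNIV. U$k$l * Q$l$i) * x$k) = (\<Sum>k\<in>UNIV. \<Sum>l\<in>UNIV. Q$l$i * (U$k$l * x$k))"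
      by (simp add: sum_distrib_left sum_distrib_right mult_ac)
    also have "\<dots> = (\<Sum>l\<in>UNIV. \<Sum>k\<in>UNIV. Q$l$i * (U$k$l * x$k))"
      by (rule sum.swap)
    also have "\<dots> = (\<Sum>l\<in>UNIV. Q$l$i * (\<Sum>k\<in>UNIV. U$k$l * x$k))"
      by (simp add: sum_distrib_left)
    finally show ?thesis .
  qed
  then show ?thesis
    by (simp add: vec_eq_iff matrix_matrix_mult_def matrix_vector_mult_def transpose_def)
qed

lemma wv_add: "wv Q (x + y) = wv Q x + wv Q y"
  by (simp add: vec_eq_iff sum.distrib algebra_simps)

context
  fixes \<mu> :: "(real^'n^'n) measure"
  assumes haar: "haar_orthogonal \<mu>"
begin

lemma prob: "prob_space \<mu>" and sets_mu: "sets \<mu> = sets borel"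
  and ae_orth: "AE Q in \<mu>. orthogonal_matrix Q"
  and inv: "\<And>U. orthogonal_matrix U \<Longrightarrow> distr \<mu> borel (\<lambda>Q. U ** Q) = \<mu>"
  using haar unfolding haar_orthogonal_def by auto

lemma meas_mu: "f \<in> borel_measurable borel \<Longrightarrow> f \<in> borel_measurable \<mu>"
  using measurable_cong_sets[OF sets_mu refl] by blast

lemma integrable_esq: "integrable \<mu> (\<lambda>Q. esq b (wv Q x))"
proof -
  interpret prob_space \<mu> by (rule prob)
  show ?thesis
  proof (rule integrable_const_bound)
    show "AE Q in \<mu>. norm (esq b (wv Q x)) \<le> (\<Sum>A\<in>{A::'n set. card A = b}. \<Prod>i\<in>A. (norm x)^2)"
      using ae_orth by eventually_elim (metis esq_bound esq_nonneg abs_of_nonneg real_norm_def)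
    show "(\<lambda>Q. esq b (wv Q x)) \<in> borel_measurable \<mu>" by (rule meas_mu[OF meas_esq])
  qed
qed

definition G :: "nat \<Rightarrow> real^'n \<Rightarrow> real" where
  "G b x = (\<integral>Q. esq b (wv Q x) \<partial>\<mu>)"

lemma G_inv:
  assumes "orthogonal_matrix U"
  shows "G b (transpose U *v x) = G b x"
proof -
  have m: "(\<lambda>Q. U ** Q) \<in> measurable \<mu> borel"
  proof -
    have "(\<lambda>Q::real^'n^'n. U ** Q) \<in> borel_measurable borel"
      by (intro borel_measurable_continuous_onI)
         (simp add: matrix_matrix_mult_def, intro continuous_intros)
    then show ?thesis using meas_mu by blast
  qed
  have "G b x = (\<integral>Q. esq b (wv Q x) \<partial>(distr \<mu> borel (\<lambda>Q. U ** Q)))"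
    by (simp add: G_def inv[OF assms])
  also have "\<dots> = (\<integral>Q. esq b (wv (U ** Q) x) \<partial>\<mu>)"
    by (rule integral_distr[OF m meas_esq])
  also have "\<dots> = G b (transpose U *v x)"
    unfolding G_def wv_mult ..
  finally show ?thesis by simp
qed

lemma G_norm:
  assumes "norm x = norm y"
  shows "G b x = G b y"
proof -
  obtain f where f: "orthogonal_transformation f" "f x = y"
    using orthogonal_transformation_exists[OF assms] by blast
  then have lin: "linear f" and om: "orthogonal_matrix (matrix f)"
    by (auto simp: orthogonal_transformation_matrix)
  have "transpose (transpose (matrix f)) *v x = y"
    using f(2) matrix_works[OF lin[folded linear_matrix_vector_mul_eq]] by simp
  then show ?thesis using G_inv[of "transpose (matrix f)" b x] om by simp
qed

lemma G_scale: "G b (s *\<^sub>R x) = s^(2*b) * G b x"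
  unfolding G_def wv_scale esq_scale by simp

lemma G_formula: "G b x = norm x ^ (2*b) * G b (axis k 1)"
proof -
  have "G b x = G b (norm x *\<^sub>R axis k 1)"
    by (rule G_norm) simp
  then show ?thesis by (simp add: G_scale)
qed

end



lemma norm_axis_add_sq:
  "norm (axis k 1 + t *\<^sub>R axis j (1::real) :: real^'n)^2 = 1 + 2 * t * (if j = k then 1 else 0) + t^2"
  unfolding power2_norm_eq_inner by (simp add: inner_add_left inner_add_right inner_axis_axis power2_eq_square algebra_simps)

lemma axis_nth_real: "axis j (1::real) $ i = (if i = j then 1 else 0)"
  by (simp add: axis_def)

lemma sum_delta_aux:
  fixes X a b :: real
  shows "(\<Sum>j\<in>(UNIV::'n::finite set). X * (a + b * (if j = k then 1 else 0))) = X * (real CARD('n) * a + b)"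
proof -
  have "(\<Sum>j\<in>(UNIV::'n set). X * (a + b * (if j = k then 1 else 0))) =
        (\<Sum>j\<in>(UNIV::'n set). X * a + (if j = k then X * b else 0))"
    by (intro sum.cong refl) (simp add: algebra_simps)
  also have "\<dots> = X * (real CARD('n) * a + b)"
    by (simp add: sum.distrib algebra_simps)
  finally show ?thesis .
qed

context
  fixes \<mu> :: "(real^'n^'n) measure"
  assumes haar: "haar_orthogonal \<mu>"
begin

lemma G_rec:
  "G \<mu> (Suc c) (axis k 1) * (real (Suc c) * (real CARD('n) + 2 * real c)) =
   real (CARD('n) - c) * G \<mu> c (axis k 1)"
proof -
  define u :: "real^'n" where "u = axis k 1"
  define N where "N = 2 * Suc c"
  obtain lam where lam: "\<And>p::real poly. degree p \<le> N \<Longrightarrow> coeff p 2 = (\<Sum>k'\<le>N. lam k' * poly p (real k'))"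
    using coeff_functional[of N 2] by blast
  define al where "al Q = (\<lambda>i. wv Q u $ i)" for Q :: "real^'n^'n"
  define be where "be Q j = (\<lambda>i. wv Q (axis j 1) $ i)" for Q :: "real^'n^'n" and j
  define PP where "PP Q j = (\<Sum>A\<in>{A::'n set. card A = Suc c}. Pq (al Q) (be Q j) A)" for Q j
  have poly_PP: "poly (PP Q j) t = esq (Suc c) (wv Q (u + t *\<^sub>R axis j 1))" for Q j t
    unfolding PP_def poly_sum esq_def
    by (intro sum.cong refl) (simp add: Pq_poly wv_add wv_scale al_def be_def)
  have deg_PP: "degree (PP Q j) \<le> N" for Q j
    unfolding PP_def N_def
    by (intro degree_sum_le) (auto intro: order.trans[OF Pq_degree])
  have pt: "(\<Sum>j\<in>UNIV. \<Sum>k'\<le>N. lam k' * esq (Suc c) (wv Q (u + real k' *\<^sub>R axis j 1)))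
        = real (CARD('n) - c) * esq c (wv Q u)" if oQ: "orthogonal_matrix Q" for Q
  proof -
    have orth: "(\<Sum>j\<in>UNIV. be Q j i * be Q j l) = (if i = l then 1 else 0)" for i l
    proof -
      have "(\<Sum>j\<in>UNIV. be Q j i * be Q j l) = (transpose Q ** Q) $ i $ l"
        by (simp add: be_def axis_nth_real matrix_matrix_mult_def transpose_def if_distrib cong: if_cong)
      also have "\<dots> = (if i = l then 1 else 0)"
        using oQ by (simp add: orthogonal_matrix mat_def)
      finally show ?thesis .
    qed
    have "(\<Sum>j\<in>UNIV. \<Sum>k'\<le>N. lam k' * esq (Suc c) (wv Q (u + real k' *\<^sub>R axis j 1)))
        = (\<Sum>j\<in>UNIV. coeff (PP Q j) 2)"
      by (simp add: lam[OF deg_PP] poly_PP)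
    also have "\<dots> = (\<Sum>A\<in>{A::'n set. card A = Suc c}. \<Sum>j\<in>UNIV. coeff (Pq (al Q) (be Q j) A) 2)"
      unfolding PP_def coeff_sum by (rule sum.swap)
    also have "\<dots> = (\<Sum>A\<in>{A::'n set. card A = Suc c}. \<Sum>i\<in>A. \<Prod>l\<in>A-{i}. (al Q l)^2)"
      by (intro sum.cong refl Pq_coeff2) (auto simp: orth)
    also have "\<dots> = (\<Sum>B\<in>{B::'n set. card B = c}. \<Sum>x\<in>-B. \<Prod>l\<in>B. (al Q l)^2)"
      using double_count[of "\<lambda>B x. \<Prod>l\<in>B. (al Q l)^2" c] by simp
    also have "\<dots> = (\<Sum>B\<in>{B::'n set. card B = c}. real (CARD('n) - c) * (\<Prod>l\<in>B. (al Q l)^2))"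
      by (intro sum.cong refl) (simp add: Compl_eq_Diff_UNIV card_Diff_subset)
    also have "\<dots> = real (CARD('n) - c) * esq c (wv Q u)"
      by (simp add: esq_def al_def sum_distrib_left)
    finally show ?thesis .
  qed
  have meas: "(\<lambda>Q. \<Sum>j\<in>UNIV. \<Sum>k'\<le>N. lam k' * esq (Suc c) (wv Q (u + real k' *\<^sub>R axis j 1))) \<in> borel_measurable \<mu>"
    by (intro borel_measurable_sum borel_measurable_times borel_measurable_const meas_mu[OF haar meas_esq])
  have meas2: "(\<lambda>Q. real (CARD('n) - c) * esq c (wv Q u)) \<in> borel_measurable \<mu>"
    by (intro borel_measurable_times borel_measurable_const meas_mu[OF haar meas_esq])
  have "(\<integral>Q. (\<Sum>j\<in>UNIV. \<Sum>k'\<le>N. lam k' * esq (Suc c) (wv Q (u + real k' *\<^sub>R axis j 1))) \<partial>\<mu>)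
     = real (CARD('n) - c) * G \<mu> c u"
    unfolding G_def[OF haar]
    by (subst integral_cong_AE[OF meas meas2]) (auto intro: AE_mp[OF ae_orth[OF haar]] simp: pt)
  moreover have "(\<integral>Q. (\<Sum>j\<in>UNIV. \<Sum>k'\<le>N. lam k' * esq (Suc c) (wv Q (u + real k' *\<^sub>R axis j 1))) \<partial>\<mu>)
     = (\<Sum>j\<in>UNIV. \<Sum>k'\<le>N. lam k' * G \<mu> (Suc c) (u + real k' *\<^sub>R axis j 1))"
    unfolding G_def[OF haar]
    by (simp add: integrable_esq[OF haar] integral_sum integrable_sum)
  moreover have "(\<Sum>j\<in>UNIV. \<Sum>k'\<le>N. lam k' * G \<mu> (Suc c) (u + real k' *\<^sub>R axis j 1))
     = G \<mu> (Suc c) u * (real (Suc c) * (real CARD('n) + 2 * real c))"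
  proof -
    have "(\<Sum>j\<in>UNIV. \<Sum>k'\<le>N. lam k' * G \<mu> (Suc c) (u + real k' *\<^sub>R axis j 1))
       = (\<Sum>j\<in>UNIV. G \<mu> (Suc c) u * (\<Sum>k'\<le>N. lam k' * poly ([:1, 2 * (if j = k then 1 else 0), 1:]^Suc c) (real k')))"
    proof (intro sum.cong refl)
      fix j
      have "G \<mu> (Suc c) (u + t *\<^sub>R axis j 1) = G \<mu> (Suc c) u * poly ([:1, 2 * (if j = k then 1 else 0), 1:]^Suc c) t" for t
      proof -
        have "G \<mu> (Suc c) (u + t *\<^sub>R axis j 1) = norm (u + t *\<^sub>R axis j 1)^(2 * Suc c) * G \<mu> (Suc c) u"
          using G_formula[OF haar, of "Suc c" "u + t *\<^sub>R axis j 1" k] by (simp add: u_def)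
        also have "\<dots> = G \<mu> (Suc c) u * poly ([:1, 2 * (if j = k then 1 else 0), 1:]^Suc c) t"
          unfolding u_def power_mult norm_axis_add_sq by (simp add: poly_power power2_eq_square algebra_simps)
        finally show ?thesis .
      qed
      then show "(\<Sum>k'\<le>N. lam k' * G \<mu> (Suc c) (u + real k' *\<^sub>R axis j 1)) =
         G \<mu> (Suc c) u * (\<Sum>k'\<le>N. lam k' * poly ([:1, 2 * (if j = k then 1 else 0), 1:]^Suc c) (real k'))"
        by (simp add: sum_distrib_left mult_ac)
    qed
    also have "\<dots> = (\<Sum>j\<in>UNIV. G \<mu> (Suc c) u * coeff ([:1, 2 * (if j = k then 1 else 0), 1:]^Suc c) 2)"
    proof (intro sum.cong refl)
      fix j
      have "degree ([:1, 2 * (if j = k then 1 else 0), 1:]^Suc c) \<le> N" unfolding N_def by (rule quad_pow_degree)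
      from lam[OF this]
      show "G \<mu> (Suc c) u * (\<Sum>k'\<le>N. lam k' * poly ([:1, 2 * (if j = k then 1 else 0), 1:]^Suc c) (real k'))
          = G \<mu> (Suc c) u * coeff ([:1, 2 * (if j = k then 1 else 0), 1:]^Suc c) 2"
        by metis
    qed
    also have "\<dots> = (\<Sum>j\<in>UNIV. G \<mu> (Suc c) u * (real (Suc c) + 2 * real (Suc c) * real c * (if j = k then 1 else 0)))"
    proof (intro sum.cong refl)
      fix j
      have "coeff ([:1, 2 * (if j = k then 1 else 0), 1:]^Suc c) 2 =
         real (Suc c) + 2 * real (Suc c) * (real (Suc c) - 1) * (if j = k then 1 else 0)^2"
        using quad_pow_coeffs[of "if j = k then 1 else 0" "Suc c"] by blast
      then show "G \<mu> (Suc c) u * coeff ([:1, 2 * (if j = k then 1 else 0), 1:]^Suc c) 2 =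
          G \<mu> (Suc c) u * (real (Suc c) + 2 * real (Suc c) * real c * (if j = k then 1 else 0))"
        by (cases "j = k") simp_all
    qed
    also have "\<dots> = G \<mu> (Suc c) u * (real (Suc c) * (real CARD('n) + 2 * real c))"
      by (simp only: sum_delta_aux) (simp add: algebra_simps)
    finally show ?thesis .
  qed
  ultimately show ?thesis by (simp add: u_def)
qed

end



context
  fixes \<mu> :: "(real^'n^'n) measure"
  assumes haar: "haar_orthogonal \<mu>"
begin

lemma fact_G:
  "fact b * G \<mu> b (axis k 1) =
     (\<Prod>j<b. real CARD('n) - real j) / (\<Prod>j<b. real CARD('n) + 2 * real j)"
proof (induction b)
  case 0
  interpret prob_space \<mu> by (rule prob[OF haar])
  show ?case by (simp add: G_def[OF haar] esq_zero prob_space)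
next
  case (Suc c)
  define n where "n = CARD('n)"
  have npos: "0 < real n + 2 * real c" unfolding n_def by (simp add: add_pos_nonneg)
  have rec: "G \<mu> (Suc c) (axis k 1) * (real (Suc c) * (real n + 2 * real c)) = real (n - c) * G \<mu> c (axis k 1)"
    using G_rec[OF haar, of c k] by (simp add: n_def)
  have D: "(\<Prod>j<Suc c. real n + 2 * real j) = (\<Prod>j<c. real n + 2 * real j) * (real n + 2 * real c)"
    by simp
  have n0: "0 < real n" unfolding n_def by simp
  have Dpos: "(\<Prod>j<c. real n + 2 * real j) \<noteq> 0"
  proof
    assume "(\<Prod>j<c. real n + 2 * real j) = 0"
    then obtain j where "real n + 2 * real j = 0" by (auto simp: prod_zero_iff)
    with n0 show False by linarith
  qed
  have key: "real (n - c) * (\<Prod>j<c. real n - real j) = (real n - real c) * (\<Prod>j<c. real n - real j)"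
  proof (cases "c \<le> n")
    case True then show ?thesis by (simp add: of_nat_diff)
  next
    case False
    then have "n \<in> {..<c}" by simp
    then have "(\<Prod>j<c. real n - real j) = 0" by (intro prod_zero) auto
    then show ?thesis by simp
  qed
  have "fact (Suc c) * G \<mu> (Suc c) (axis k 1) * (real n + 2 * real c) =
        fact c * (G \<mu> (Suc c) (axis k 1) * (real (Suc c) * (real n + 2 * real c)))"
    by (simp add: algebra_simps)
  also have "\<dots> = real (n - c) * (fact c * G \<mu> c (axis k 1))"
    using rec by simp
  also have "\<dots> = real (n - c) * ((\<Prod>j<c. real n - real j) / (\<Prod>j<c. real n + 2 * real j))"
    using Suc.IH by (simp add: n_def)
  also have "\<dots> = (real n - real c) * (\<Prod>j<c. real n - real j) / (\<Prod>j<c. real n + 2 * real j)"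
    using key by (simp add: mult.assoc)
  finally have calc: "fact (Suc c) * G \<mu> (Suc c) (axis k 1) * (real n + 2 * real c) =
      (real n - real c) * (\<Prod>j<c. real n - real j) / (\<Prod>j<c. real n + 2 * real j)" .
  have "fact (Suc c) * G \<mu> (Suc c) (axis k 1) =
      fact (Suc c) * G \<mu> (Suc c) (axis k 1) * (real n + 2 * real c) / (real n + 2 * real c)"
    using npos by simp
  also have "\<dots> = (real n - real c) * (\<Prod>j<c. real n - real j) / (\<Prod>j<c. real n + 2 * real j) / (real n + 2 * real c)"
    by (simp only: calc)
  finally have "fact (Suc c) * G \<mu> (Suc c) (axis k 1) =
      (real n - real c) * (\<Prod>j<c. real n - real j) / ((\<Prod>j<c. real n + 2 * real j) * (real n + 2 * real c))"
    by (simp only: divide_divide_eq_left)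
  then show ?case using D by (simp add: n_def mult.commute)
qed

end

theorem proposition5p8:
  fixes v :: "real^'n" and \<mu> :: "(real^'n^'n) measure"
    and p a :: nat and E :: "(nat \<times> nat) list"
  assumes "haar_orthogonal \<mu>"
    and "p_regular_multigraph p a E"
  shows "free_cumulant \<mu> p a E (rank_one v) =
    (\<Prod>j<length E. real CARD('n) - real j) / (\<Prod>j<length E. real CARD('n) + 2 * real j)
      * norm v ^ (2 * length E)"
proof -
  define b where "b = length E"
  obtain k :: 'n where True by simp
  have "free_cumulant \<mu> p a E (rank_one v) = (\<integral>Q. fact b * esq b (wv Q v) \<partial>\<mu>)"
    unfolding free_cumulant_def b_def
    by (simp only: graph_moment_rank_one[OF assms(2)] injs_prod_esq)
  also have "\<dots> = fact b * G \<mu> b v"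
    by (simp add: G_def[OF assms(1)])
  also have "\<dots> = fact b * G \<mu> b (axis k 1) * norm v ^ (2 * b)"
    using G_formula[OF assms(1), of b v k] by simp
  also have "\<dots> = (\<Prod>j<b. real CARD('n) - real j) / (\<Prod>j<b. real CARD('n) + 2 * real j) * norm v ^ (2 * b)"
    by (simp add: fact_G[OF assms(1)])
  finally show ?thesis by (simp add: b_def)
qed


end
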